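(* Let $K^2$ be the Klein bottle and $\mathcal X(K^2)=\mathrm{Hom}(\pi_1(K^2),\mathrm{SL}_2(\mathbb C))/\!/\mathrm{SL}_2(\mathbb C)$ its $\mathrm{SL}_2(\mathbb C)$-character variety. Then $\mathcal X(K^2)$ has three irreducible components. Exactly one of them contains characters of irreducible representations, and this component has dimension 1. *)

theory Defs
  imports "HOL-Analysis.Analysis"
begin

type_synonym pt3 = "complex \<times> complex \<times> complex"

inductive_set poly_fun3 :: "(pt3 \<Rightarrow> complex) set" where
  const: "(\<lambda>_. c) \<in> poly_fun3"
| var1: "(\<lambda>x. fst x) \<in> poly_fun3"
| var2: "(\<lambda>x. fst (snd x)) \<in> poly_fun3"
| var3: "(\<lambda>x. snd (snd x)) \<in> poly_fun3"
| add: "p \<in> poly_fun3 \<Longrightarrow> q \<in> poly_fun3 \<Longrightarrow> (\<lambda>x. p x + q x) \<in> poly_fun3"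
| mult: "p \<in> poly_fun3 \<Longrightarrow> q \<in> poly_fun3 \<Longrightarrow> (\<lambda>x. p x * q x) \<in> poly_fun3"

definition zariski_closed3 :: "pt3 set \<Rightarrow> bool" where
  "zariski_closed3 S \<longleftrightarrow> (\<exists>P \<subseteq> poly_fun3. S = {x. \<forall>p\<in>P. p x = 0})"

definition closed_in_var :: "pt3 set \<Rightarrow> pt3 set \<Rightarrow> bool" where
  "closed_in_var X Y \<longleftrightarrow> (\<exists>Z. zariski_closed3 Z \<and> Y = X \<inter> Z)"

definition irreducible_closed :: "pt3 set \<Rightarrow> pt3 set \<Rightarrow> bool" where
  "irreducible_closed X Y \<longleftrightarrow> closed_in_var X Y \<and> Y \<noteq> {} \<and>
     (\<forall>Y1 Y2. closed_in_var X Y1 \<longrightarrow> closed_in_var X Y2 \<longrightarrow> Y \<subseteq> Y1 \<union> Y2 \<longrightarrow>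
        Y \<subseteq> Y1 \<or> Y \<subseteq> Y2)"

definition irreducible_components :: "pt3 set \<Rightarrow> pt3 set set" where
  "irreducible_components X = {Y. irreducible_closed X Y \<and>
     (\<forall>Y'. irreducible_closed X Y' \<longrightarrow> Y \<subseteq> Y' \<longrightarrow> Y' = Y)}"

definition krull_dim :: "pt3 set \<Rightarrow> pt3 set \<Rightarrow> enat" where
  "krull_dim X Y = Sup {enat n | n. \<exists>C :: nat \<Rightarrow> pt3 set.
      (\<forall>i\<le>n. irreducible_closed X (C i) \<and> C i \<subseteq> Y) \<and> (\<forall>i<n. C i \<subset> C (Suc i))}"

type_synonym mat2 = "complex^2^2"

text \<open>Representations of \<pi>_1(K^2) = \<langle>a, b | a b a b^{-1} = 1\<rangle> into SL_2(C),
  given by the images (A, B) of the generators.\<close>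
definition klein_rep :: "mat2 \<Rightarrow> mat2 \<Rightarrow> bool" where
  "klein_rep A B \<longleftrightarrow> det A = 1 \<and> det B = 1 \<and> A ** B ** A ** matrix_inv B = mat 1"

text \<open>A representation generated by A, B is irreducible iff there is no common invariant line.\<close>
definition irreducible_pair :: "mat2 \<Rightarrow> mat2 \<Rightarrow> bool" where
  "irreducible_pair A B \<longleftrightarrow>
     \<not> (\<exists>v :: complex^2. v \<noteq> 0 \<and> (\<exists>c. A *v v = c *s v) \<and> (\<exists>d. B *v v = d *s v))"

text \<open>The character of the representation, as a point of X(F_2) = C^3 via the Fricke
  coordinates (tr A, tr B, tr AB).\<close>
definition char_pt :: "mat2 \<Rightarrow> mat2 \<Rightarrow> pt3" where
  "char_pt A B = (trace A, trace B, trace (A ** B))"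

definition klein_char_variety :: "pt3 set" where
  "klein_char_variety = {char_pt A B | A B. klein_rep A B}"

end

theory Submission
  imports Defs "HOL-Computational_Algebra.Polynomial"
begin


definition mk2 :: "complex \<Rightarrow> complex \<Rightarrow> complex \<Rightarrow> complex \<Rightarrow> mat2" where
  "mk2 a b c d = vector [vector [a,b], vector [c,d]]"

definition mkv :: "complex \<Rightarrow> complex \<Rightarrow> complex^2" where
  "mkv a b = vector [a,b]"

lemma mk2_nth [simp]: "mk2 a b c d $ 1 $ 1 = a" "mk2 a b c d $ 1 $ 2 = b"
  "mk2 a b c d $ 2 $ 1 = c" "mk2 a b c d $ 2 $ 2 = d"
  by (simp_all add: mk2_def)

lemma mkv_nth [simp]: "mkv a b $ 1 = a" "mkv a b $ 2 = b"
  by (simp_all add: mkv_def)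

lemma mk2_eta: "M = mk2 (M$1$1) (M$1$2) (M$2$1) (M$2$2)"
  by (simp add: vec_eq_iff forall_2)

lemma mkv_eta: "v = mkv (v$1) (v$2)"
  by (simp add: vec_eq_iff forall_2)

lemma mk2_eq [simp]: "mk2 a b c d = mk2 e f g h \<longleftrightarrow> a = e \<and> b = f \<and> c = g \<and> d = h"
  by (simp add: vec_eq_iff forall_2)

lemma mkv_eq [simp]: "mkv a b = mkv e f \<longleftrightarrow> a = e \<and> b = f"
  by (simp add: vec_eq_iff forall_2)

lemma mkv_zero [simp]: "mkv a b = 0 \<longleftrightarrow> a = 0 \<and> b = 0"
  by (simp add: vec_eq_iff forall_2)

lemma mk2_mult [simp]: "mk2 a b c d ** mk2 e f g h = mk2 (a*e+b*g) (a*f+b*h) (c*e+d*g) (c*f+d*h)"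
  by (simp add: vec_eq_iff forall_2 matrix_matrix_mult_def sum_2)

lemma mk2_mulv [simp]: "mk2 a b c d *v mkv x y = mkv (a*x+b*y) (c*x+d*y)"
  by (simp add: vec_eq_iff forall_2 matrix_vector_mult_def sum_2)

lemma mkv_scale [simp]: "k *s mkv x y = mkv (k*x) (k*y)"
  by (simp add: vec_eq_iff forall_2)

lemma det_mk2 [simp]: "det (mk2 a b c d) = a*d - b*c"
  by (simp add: det_2)

lemma trace_mk2 [simp]: "trace (mk2 a b c d) = a + d"
  by (simp add: trace_def sum_2)

lemma mat1_mk2: "(mat 1 :: mat2) = mk2 1 0 0 1"
  by (simp add: vec_eq_iff forall_2 mat_def)

lemma klein_rep_iff: "klein_rep A B \<longleftrightarrow> det A = 1 \<and> det B = 1 \<and> A ** B ** A = B"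
proof -
  have *: "B ** matrix_inv B = mat 1 \<and> matrix_inv B ** B = mat 1" if "det B = 1"
  proof -
    have "invertible B" using that invertible_det_nz by force
    then show ?thesis unfolding invertible_def matrix_inv_def by (rule someI_ex)
  qed
  show ?thesis
  proof
    assume h: "klein_rep A B"
    then have d: "det B = 1" "det A = 1" by (auto simp: klein_rep_def)
    have "A ** B ** A = (A ** B ** A ** matrix_inv B) ** B"
      using *[OF d(1)] by (simp add: matrix_mul_assoc[symmetric])
    also have "\<dots> = B" using h by (simp add: klein_rep_def)
    finally show "det A = 1 \<and> det B = 1 \<and> A ** B ** A = B" using d by simp
  next
    assume h: "det A = 1 \<and> det B = 1 \<and> A ** B ** A = B"
    then show "klein_rep A B" using *[OF conjunct1[OF conjunct2[OF h]]] by (simp add: klein_rep_def)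
  qed
qed



lemma quad_root: "\<exists>k::complex. k^2 - p*k + q = 0"
proof -
  define k where "k = (p + csqrt (p^2 - 4*q))/2"
  have "(csqrt (p^2 - 4*q))^2 = p^2 - 4*q" by simp
  then show ?thesis unfolding k_def by (intro exI[of _ k]) (simp add: k_def power2_eq_square field_simps, algebra)
qed

lemma eigvec_exists: "\<exists>v. v \<noteq> 0 \<and> (\<exists>k. mk2 e f g h *v v = k *s v)"
proof -
  obtain k where k: "k^2 - (e+h)*k + (e*h - f*g) = 0" using quad_root by blast
  show ?thesis
  proof (cases "e - k = 0 \<and> f = 0")
    case False
    have "mk2 e f g h *v mkv f (k-e) = k *s mkv f (k-e)"
      using k by (simp add: power2_eq_square) algebra
    then show ?thesis using False by (intro exI[of _ "mkv f (k-e)"]) auto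
  next
    case T1: True
    show ?thesis
    proof (cases "h - k = 0 \<and> g = 0")
      case False
      have "mk2 e f g h *v mkv (h-k) (-g) = k *s mkv (h-k) (-g)"
        using T1 by (simp add: algebra_simps)
      then show ?thesis using False by (intro exI[of _ "mkv (h-k) (-g)"]) auto
    next
      case True
      have "mk2 e f g h *v mkv 1 0 = k *s mkv 1 0" using T1 True by simp
      then show ?thesis by (intro exI[of _ "mkv 1 0"]) auto
    qed
  qed
qed

lemma traces_rel:
  assumes "klein_rep A B"
  shows "trace A * trace (A ** B) = 2 * trace B \<and> trace A * trace B = 2 * trace (A ** B)"
proof -
  obtain a b c d where A: "A = mk2 a b c d" using mk2_eta by blast
  obtain e f g h where B: "B = mk2 e f g h" using mk2_eta by blast
  from assms have h: "a*d - b*c = 1" "(a*e+b*g)*a + (a*f+b*h)*c = e" "(a*e+b*g)*b + (a*f+b*h)*d = f"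
    "(c*e+d*g)*a + (c*f+d*h)*c = g" "(c*e+d*g)*b + (c*f+d*h)*d = h"
    by (auto simp: klein_rep_iff A B)
  have 1: "(a+d)*(a*e+b*g+c*f+d*h) = 2*(e+h)" using h by algebra
  have 2: "(a+d)*(e+h) = 2*(a*e+b*g+c*f+d*h)" using h by algebra
  show ?thesis using 1 2 by (simp add: A B algebra_simps)
qed



lemma par_lemma:
  fixes r1 r2 u1 u2 w1 w2 :: complex
  assumes "r1*u1 + r2*u2 = 0" "r1*w1 + r2*w2 = 0" "\<not>(r1 = 0 \<and> r2 = 0)" "\<not>(u1 = 0 \<and> u2 = 0)"
  shows "\<exists>k. w1 = k*u1 \<and> w2 = k*u2"
proof -
  have "r1*(u1*w2 - u2*w1) = 0" "r2*(u1*w2 - u2*w1) = 0" using assms(1,2) by algebra+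
  then have c: "u1*w2 = u2*w1" using assms(3) by auto
  show ?thesis
  proof (cases "u1 = 0")
    case False
    then show ?thesis using c by (intro exI[of _ "w1/u1"]) (auto simp: field_simps)
  next
    case True
    then show ?thesis using c assms(4) by (intro exI[of _ "w2/u2"]) (auto simp: field_simps)
  qed
qed

lemma irred_trace:
  assumes "klein_rep A B" "irreducible_pair A B"
  shows "trace A \<noteq> 2 \<and> trace A \<noteq> -2"
proof -
  obtain a b c d where A: "A = mk2 a b c d" using mk2_eta by blast
  obtain e f g h where B: "B = mk2 e f g h" using mk2_eta by blast
  from assms have h: "a*d - b*c = 1" "(a*e+b*g)*a + (a*f+b*h)*c = e" "(a*e+b*g)*b + (a*f+b*h)*d = f"
    "(c*e+d*g)*a + (c*f+d*h)*c = g" "(c*e+d*g)*b + (c*f+d*h)*d = h"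
    by (auto simp: klein_rep_iff A B)
  have nirr: False if s: "s^2 = 1" "a + d = 2 * s" for s
  proof -
    have common: False if "v \<noteq> 0" "A *v v = k *s v" "B *v v = m *s v" for v k m
      using assms(2) that unfolding irreducible_pair_def by blast
    show False
    proof (cases "a - s = 0 \<and> b = 0 \<and> c = 0 \<and> d - s = 0")
      case True
      obtain v m where v: "v \<noteq> 0" "B *v v = m *s v" using eigvec_exists[of e f g h] B by blast
      obtain u1 u2 where vv: "v = mkv u1 u2" using mkv_eta by blast
      have "A *v v = s *s v" using True by (simp add: A vv)
      then show False using common v by blast
    next
      case False
      have detN: "(a-s)*(d-s) - b*c = 0" using h(1) s by algebra
      have key: "\<exists>r1 r2 u1 u2. \<not>(r1 = 0 \<and> r2 = 0) \<and> \<not>(u1 = 0 \<and> u2 = 0) \<and>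
         (a-s)*u1 + b*u2 = 0 \<and> c*u1 + (d-s)*u2 = 0 \<and> r1*u1 + r2*u2 = 0 \<and>
         (\<forall>w1 w2. (a-s)*w1 + b*w2 = 0 \<and> c*w1 + (d-s)*w2 = 0 \<longrightarrow> r1*w1 + r2*w2 = 0)"
      proof (cases "a - s = 0 \<and> b = 0")
        case False
        then show ?thesis
          by (intro exI[of _ "a-s"] exI[of _ b] exI[of _ b] exI[of _ "-(a-s)"])
             (use detN in \<open>auto simp: algebra_simps\<close>)
      next
        case True
        then show ?thesis using \<open>\<not> (a - s = 0 \<and> b = 0 \<and> c = 0 \<and> d - s = 0)\<close>
          by (intro exI[of _ c] exI[of _ "d-s"] exI[of _ "d-s"] exI[of _ "-c"])
             (use detN in \<open>auto simp: algebra_simps\<close>)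
      qed
      then obtain r1 r2 u1 u2 where r: "\<not>(r1 = 0 \<and> r2 = 0)" "\<not>(u1 = 0 \<and> u2 = 0)"
        "(a-s)*u1 + b*u2 = 0" "c*u1 + (d-s)*u2 = 0" "r1*u1 + r2*u2 = 0"
        "\<And>w1 w2. (a-s)*w1 + b*w2 = 0 \<Longrightarrow> c*w1 + (d-s)*w2 = 0 \<Longrightarrow> r1*w1 + r2*w2 = 0" by blast
      define w1 where "w1 = e*u1 + f*u2"
      define w2 where "w2 = g*u1 + h*u2"
      have sN: "s*((a-s)*w1 + b*w2) = 0" "s*(c*w1 + (d-s)*w2) = 0"
        using h s r(3,4) unfolding w1_def w2_def by algebra+
      have "s \<noteq> 0" using s by auto
      then have "(a-s)*w1 + b*w2 = 0" "c*w1 + (d-s)*w2 = 0" using sN by auto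
      then have "r1*w1 + r2*w2 = 0" using r(6) by blast
      then obtain m where m: "w1 = m*u1" "w2 = m*u2" using par_lemma[OF r(5) _ r(1,2)] by blast
      have "A *v mkv u1 u2 = s *s mkv u1 u2" using r(3,4) by (simp add: A algebra_simps)
      moreover have "B *v mkv u1 u2 = m *s mkv u1 u2" using m by (simp add: B w1_def w2_def)
      ultimately show False using common[of "mkv u1 u2" s m] r(2) by simp
    qed
  qed
  show ?thesis
  proof
    show "trace A \<noteq> 2" using nirr[of 1] by (auto simp: A)
    show "trace A \<noteq> -2" using nirr[of "-1"] by (auto simp: A)
  qed
qed



definition polyline :: "(complex \<Rightarrow> pt3) \<Rightarrow> bool" where
  "polyline \<gamma> \<longleftrightarrow> (\<forall>p\<in>poly_fun3. \<exists>q. \<forall>t. p (\<gamma> t) = poly q t)"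

lemma poly_comp:
  assumes "p \<in> poly_fun3"
  shows "\<exists>q. \<forall>t. p (a1+b1*t, a2+b2*t, a3+b3*t) = poly q t"
  using assms
proof induction
  case (const c) then show ?case by (intro exI[of _ "[:c:]"]) simp
next
  case var1 then show ?case by (intro exI[of _ "[:a1,b1:]"]) simp
next
  case var2 then show ?case by (intro exI[of _ "[:a2,b2:]"]) simp
next
  case var3 then show ?case by (intro exI[of _ "[:a3,b3:]"]) simp
next
  case (add p q)
  then obtain q1 q2 where "\<forall>t. p (a1+b1*t, a2+b2*t, a3+b3*t) = poly q1 t"
    "\<forall>t. q (a1+b1*t, a2+b2*t, a3+b3*t) = poly q2 t" by blast
  then show ?case by (intro exI[of _ "q1+q2"]) simp
next
  case (mult p q)
  then obtain q1 q2 where "\<forall>t. p (a1+b1*t, a2+b2*t, a3+b3*t) = poly q1 t"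
    "\<forall>t. q (a1+b1*t, a2+b2*t, a3+b3*t) = poly q2 t" by blast
  then show ?case by (intro exI[of _ "q1*q2"]) simp
qed

lemma polyline_affine: "polyline (\<lambda>t. (a1+b1*t, a2+b2*t, a3+b3*t))"
  unfolding polyline_def using poly_comp by blast

lemma polyline_L0: "polyline (\<lambda>t. (t, 0, 0))"
  using polyline_affine[of 0 1 0 0 0 0] by simp
lemma polyline_L1: "polyline (\<lambda>t. (2, t, t))"
  using polyline_affine[of 2 0 0 1 0 1] by simp
lemma polyline_L2: "polyline (\<lambda>t. (-2, t, -t))"
  using polyline_affine[of "-2" 0 0 1 0 "-1"] by simp

lemma line_sub_or_finite:
  assumes "polyline \<gamma>" "zariski_closed3 Z"
  shows "range \<gamma> \<subseteq> Z \<or> finite {t. \<gamma> t \<in> Z}"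
proof (rule disjCI)
  assume "\<not> finite {t. \<gamma> t \<in> Z}"
  obtain P where P: "P \<subseteq> poly_fun3" "Z = {x. \<forall>p\<in>P. p x = 0}"
    using assms(2) unfolding zariski_closed3_def by blast
  show "range \<gamma> \<subseteq> Z"
  proof (rule ccontr)
    assume "\<not> range \<gamma> \<subseteq> Z"
    then obtain t0 where "\<gamma> t0 \<notin> Z" by blast
    then obtain p where p: "p \<in> P" "p (\<gamma> t0) \<noteq> 0" using P by auto
    obtain q where q: "\<forall>t. p (\<gamma> t) = poly q t" using assms(1) p(1) P(1) unfolding polyline_def by blast
    have "q \<noteq> 0" using p q by auto
    then have "finite {t. poly q t = 0}" by (rule poly_roots_finite)
    moreover have "{t. \<gamma> t \<in> Z} \<subseteq> {t. poly q t = 0}" using P p q by auto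
    ultimately show False using \<open>\<not> finite {t. \<gamma> t \<in> Z}\<close> finite_subset by blast
  qed
qed

lemma zc_union: "zariski_closed3 Z1 \<Longrightarrow> zariski_closed3 Z2 \<Longrightarrow> zariski_closed3 (Z1 \<union> Z2)"
proof -
  assume "zariski_closed3 Z1" "zariski_closed3 Z2"
  then obtain P1 P2 where P: "P1 \<subseteq> poly_fun3" "Z1 = {x. \<forall>p\<in>P1. p x = 0}"
    "P2 \<subseteq> poly_fun3" "Z2 = {x. \<forall>p\<in>P2. p x = 0}" unfolding zariski_closed3_def by blast
  define P where "P = {(\<lambda>x. p x * q x) | p q. p \<in> P1 \<and> q \<in> P2}"
  have "P \<subseteq> poly_fun3" using P by (auto simp: P_def intro: poly_fun3.mult)
  moreover have "Z1 \<union> Z2 = {x. \<forall>p\<in>P. p x = 0}"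
  proof (intro set_eqI iffI)
    fix x assume "x \<in> Z1 \<union> Z2"
    then show "x \<in> {x. \<forall>p\<in>P. p x = 0}" using P unfolding P_def by auto
  next
    fix x assume x: "x \<in> {x. \<forall>p\<in>P. p x = 0}"
    show "x \<in> Z1 \<union> Z2"
    proof (rule ccontr)
      assume "x \<notin> Z1 \<union> Z2"
      then obtain p q where "p \<in> P1" "q \<in> P2" "p x \<noteq> 0" "q x \<noteq> 0" using P by auto
      moreover have "(\<lambda>x. p x * q x) \<in> P" unfolding P_def using calculation by blast
      ultimately show False using x by auto
    qed
  qed
  ultimately show ?thesis unfolding zariski_closed3_def by blast
qed

lemma zc_empty: "zariski_closed3 {}"
  unfolding zariski_closed3_def
  by (intro exI[of _ "{\<lambda>_. 1}"]) (auto intro: poly_fun3.const)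

lemma pf_sub: "p \<in> poly_fun3 \<Longrightarrow> (\<lambda>x. p x - c) \<in> poly_fun3"
proof -
  assume "p \<in> poly_fun3"
  then have "(\<lambda>x. p x + (\<lambda>_. - c) x) \<in> poly_fun3" by (intro poly_fun3.add poly_fun3.const)
  then show ?thesis by simp
qed

lemma pf_lin: "p \<in> poly_fun3 \<Longrightarrow> q \<in> poly_fun3 \<Longrightarrow> (\<lambda>x. p x + c * q x) \<in> poly_fun3"
proof -
  assume "p \<in> poly_fun3" "q \<in> poly_fun3"
  then have "(\<lambda>x. p x + (\<lambda>x. (\<lambda>_. c) x * q x) x) \<in> poly_fun3"
    by (intro poly_fun3.add poly_fun3.mult poly_fun3.const)
  then show ?thesis by simp
qed

lemma pf_diff: "p \<in> poly_fun3 \<Longrightarrow> q \<in> poly_fun3 \<Longrightarrow> (\<lambda>x. p x - q x) \<in> poly_fun3"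
  using pf_lin[of p q "-1"] by simp

lemma pf_plus: "p \<in> poly_fun3 \<Longrightarrow> q \<in> poly_fun3 \<Longrightarrow> (\<lambda>x. p x + q x) \<in> poly_fun3"
  by (rule poly_fun3.add)

lemma pf_plusc: "p \<in> poly_fun3 \<Longrightarrow> (\<lambda>x. p x + c) \<in> poly_fun3"
  using pf_sub[of p "-c"] by simp

lemma zc_single: "zariski_closed3 {a}"
proof -
  obtain a1 a2 a3 where a: "a = (a1, a2, a3)" by (cases a) auto
  let ?P = "{(\<lambda>x. fst x - a1), (\<lambda>x. fst (snd x) - a2), (\<lambda>x. snd (snd x) - a3)}"
  have "?P \<subseteq> poly_fun3" by (simp add: pf_sub poly_fun3.var1 poly_fun3.var2 poly_fun3.var3)
  moreover have "{a} = {x. \<forall>p\<in>?P. p x = 0}" by (auto simp: a)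
  ultimately show ?thesis unfolding zariski_closed3_def by blast
qed

lemma zc_finite: "finite S \<Longrightarrow> zariski_closed3 S"
proof (induction S rule: finite_induct)
  case empty then show ?case by (rule zc_empty)
next
  case (insert a S)
  then show ?case using zc_union[OF zc_single[of a] insert.IH] by simp
qed



definition "L0 = range (\<lambda>t::complex. (t, 0::complex, 0::complex))"
definition "L1 = range (\<lambda>t::complex. (2::complex, t, t))"
definition "L2 = range (\<lambda>t::complex. (-2::complex, t, -t))"
definition "XX = L0 \<union> L1 \<union> L2"

lemma mem_L0: "(a,b,c) \<in> L0 \<longleftrightarrow> b = 0 \<and> c = 0"
  unfolding L0_def image_iff by auto
lemma mem_L1: "(a,b,c) \<in> L1 \<longleftrightarrow> a = 2 \<and> c = b"
  unfolding L1_def image_iff by auto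
lemma mem_L2: "(a,b,c) \<in> L2 \<longleftrightarrow> a = -2 \<and> c = -b"
  unfolding L2_def image_iff by auto

lemma zc_L0: "zariski_closed3 L0"
proof -
  let ?P = "{(\<lambda>x. fst (snd x)), (\<lambda>x::pt3. snd (snd x))}"
  have "?P \<subseteq> poly_fun3" by (simp add: poly_fun3.var1 poly_fun3.var2 poly_fun3.var3)
  moreover have "L0 = {x. \<forall>p\<in>?P. p x = 0}"
  proof (rule set_eqI)
    fix x :: pt3
    obtain a b c where x: "x = (a,b,c)" by (cases x) auto
    show "x \<in> L0 \<longleftrightarrow> x \<in> {x. \<forall>p\<in>?P. p x = 0}" unfolding x mem_L0 by (simp add: )
  qed
  ultimately show ?thesis unfolding zariski_closed3_def by blast
qed

lemma zc_L1: "zariski_closed3 L1"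
proof -
  let ?P = "{(\<lambda>x. fst x - 2), (\<lambda>x::pt3. fst (snd x) - snd (snd x))}"
  have "?P \<subseteq> poly_fun3" using pf_sub[OF poly_fun3.var1] pf_plusc[OF poly_fun3.var1]
    pf_diff[OF poly_fun3.var2 poly_fun3.var3] pf_plus[OF poly_fun3.var2 poly_fun3.var3] by simp
  moreover have "L1 = {x. \<forall>p\<in>?P. p x = 0}"
  proof (rule set_eqI)
    fix x :: pt3
    obtain a b c where x: "x = (a,b,c)" by (cases x) auto
    show "x \<in> L1 \<longleftrightarrow> x \<in> {x. \<forall>p\<in>?P. p x = 0}" unfolding x mem_L1 by auto
  qed
  ultimately show ?thesis unfolding zariski_closed3_def by blast
qed

lemma zc_L2: "zariski_closed3 L2"
proof -
  let ?P = "{(\<lambda>x. fst x + 2), (\<lambda>x::pt3. fst (snd x) + snd (snd x))}"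
  have "?P \<subseteq> poly_fun3" using pf_sub[OF poly_fun3.var1] pf_plusc[OF poly_fun3.var1]
    pf_diff[OF poly_fun3.var2 poly_fun3.var3] pf_plus[OF poly_fun3.var2 poly_fun3.var3] by simp
  moreover have "L2 = {x. \<forall>p\<in>?P. p x = 0}"
  proof (rule set_eqI)
    fix x :: pt3
    obtain a b c where x: "x = (a,b,c)" by (cases x) auto
    show "x \<in> L2 \<longleftrightarrow> x \<in> {x. \<forall>p\<in>?P. p x = 0}" unfolding x mem_L2 by (simp add:  eq_neg_iff_add_eq_0 add.commute)
  qed
  ultimately show ?thesis unfolding zariski_closed3_def by blast
qed


lemma XX_mem: "(x,y,z) \<in> XX \<longleftrightarrow> (y = 0 \<and> z = 0) \<or> (x = 2 \<and> z = y) \<or> (x = -2 \<and> z = -y)"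
  unfolding XX_def by (simp add: mem_L0 mem_L1 mem_L2)

lemma char_var_eq: "klein_char_variety = XX"
proof (intro set_eqI iffI)
  fix p assume "p \<in> klein_char_variety"
  then obtain A B where AB: "klein_rep A B" "p = char_pt A B" unfolding klein_char_variety_def by blast
  define x where "x = trace A"
  define y where "y = trace B"
  define z where "z = trace (A ** B)"
  have r: "x*z = 2*y" "x*y = 2*z" using traces_rel[OF AB(1)] unfolding x_def y_def z_def by auto
  have p: "p = (x,y,z)" using AB(2) unfolding char_pt_def x_def y_def z_def by simp
  have e1: "z*((x-2)*(x+2)) = 0" "y*((x-2)*(x+2)) = 0" using r by algebra+
  show "p \<in> XX"
  proof (cases "x = 2 \<or> x = -2")
    case True
    then show ?thesis using r unfolding p XX_mem by auto
  next
    case False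
    then have "x + 2 \<noteq> 0" "x - 2 \<noteq> 0" using eq_neg_iff_add_eq_0[of x 2] by auto
    then have "(x-2)*(x+2) \<noteq> 0" by simp
    then have "y = 0" "z = 0" using e1 by auto
    then show ?thesis unfolding p XX_mem by auto
  qed
next
  fix p assume "p \<in> XX"
  obtain x y z where p: "p = (x,y,z)" by (cases p) auto
  have h: "(y = 0 \<and> z = 0) \<or> (x = 2 \<and> z = y) \<or> (x = -2 \<and> z = -y)"
    using XX_mem \<open>p \<in> XX\<close> p by simp
  have "\<exists>A B. klein_rep A B \<and> char_pt A B = (x,y,z)"
  proof -
    { assume h0: "y = 0" "z = 0"
      obtain l where l: "l^2 - x*l + 1 = 0" using quad_root by blast
      then have l0: "l \<noteq> 0" by auto
      have tr: "l + 1/l = x" using l l0 by (simp add: field_simps power2_eq_square)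
      have "klein_rep (mk2 l 0 0 (1/l)) (mk2 0 1 (-1) 0)" using l0 by (simp add: klein_rep_iff)
      moreover have "char_pt (mk2 l 0 0 (1/l)) (mk2 0 1 (-1) 0) = (x,y,z)"
        using tr h0 by (simp add: char_pt_def)
      ultimately have ?thesis by blast }
    moreover
    { assume h1: "x = 2" "z = y"
      have "klein_rep (mk2 1 0 0 1) (mk2 y (-1) 1 0)" by (simp add: klein_rep_iff)
      moreover have "char_pt (mk2 1 0 0 1) (mk2 y (-1) 1 0) = (x,y,z)"
        using h1 by (simp add: char_pt_def)
      ultimately have ?thesis by blast }
    moreover
    { assume h2: "x = -2" "z = -y"
      have "klein_rep (mk2 (-1) 0 0 (-1)) (mk2 y (-1) 1 0)" by (simp add: klein_rep_iff)
      moreover have "char_pt (mk2 (-1) 0 0 (-1)) (mk2 y (-1) 1 0) = (x,y,z)"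
        using h2 by (simp add: char_pt_def)
      ultimately have ?thesis by blast }
    ultimately show ?thesis using h by blast
  qed
  then obtain A B where AB: "klein_rep A B" "char_pt A B = (x,y,z)" by blast
  show "p \<in> klein_char_variety" unfolding klein_char_variety_def p mem_Collect_eq
    using AB by (intro exI[of _ A] exI[of _ B]) simp
qed

lemma closed_sub: "closed_in_var X Y \<Longrightarrow> Y \<subseteq> X"
  unfolding closed_in_var_def by blast

lemma closed_of_zc: "zariski_closed3 Y \<Longrightarrow> Y \<subseteq> X \<Longrightarrow> closed_in_var X Y"
  unfolding closed_in_var_def by (intro exI[of _ Y]) blast

lemma line_irred:
  assumes "polyline \<gamma>" "range \<gamma> \<subseteq> X" "zariski_closed3 (range \<gamma>)"
  shows "irreducible_closed X (range \<gamma>)"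
  unfolding irreducible_closed_def
proof (intro conjI allI impI)
  show "closed_in_var X (range \<gamma>)" using closed_of_zc assms(2,3) by blast
  show "range \<gamma> \<noteq> {}" by simp
  fix Y1 Y2 assume c: "closed_in_var X Y1" "closed_in_var X Y2" "range \<gamma> \<subseteq> Y1 \<union> Y2"
  obtain Z1 Z2 where Z: "zariski_closed3 Z1" "Y1 = X \<inter> Z1" "zariski_closed3 Z2" "Y2 = X \<inter> Z2"
    using c(1,2) unfolding closed_in_var_def by blast
  have U: "{t. \<gamma> t \<in> Z1} \<union> {t. \<gamma> t \<in> Z2} = UNIV" using c(3) Z by auto
  have "range \<gamma> \<subseteq> Z1 \<or> range \<gamma> \<subseteq> Z2"
  proof (rule ccontr)
    assume "\<not> ?thesis"
    then have "finite {t. \<gamma> t \<in> Z1}" "finite {t. \<gamma> t \<in> Z2}"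
      using line_sub_or_finite[OF assms(1) Z(1)] line_sub_or_finite[OF assms(1) Z(3)] by auto
    then have "finite (UNIV :: complex set)" using U by (metis finite_Un)
    then show False using infinite_UNIV_char_0 by blast
  qed
  then show "range \<gamma> \<subseteq> Y1 \<or> range \<gamma> \<subseteq> Y2" using Z assms(2) by blast
qed

lemma irred_sub_line:
  assumes "polyline \<gamma>" "irreducible_closed X C" "C \<subseteq> range \<gamma>" "C \<noteq> range \<gamma>" "range \<gamma> \<subseteq> X"
  shows "\<exists>a. C = {a}"
proof -
  obtain Z where Z: "zariski_closed3 Z" "C = X \<inter> Z" using assms(2)
    unfolding irreducible_closed_def closed_in_var_def by blast
  have CX: "C \<subseteq> X" using Z by blast
  have "\<not> range \<gamma> \<subseteq> Z"
  proof
    assume "range \<gamma> \<subseteq> Z"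
    then have "range \<gamma> \<subseteq> C" using assms(5) Z by blast
    then show False using assms(3,4) by blast
  qed
  then have fin: "finite {t. \<gamma> t \<in> Z}" using line_sub_or_finite[OF assms(1) Z(1)] by blast
  have "C \<subseteq> \<gamma> ` {t. \<gamma> t \<in> Z}" using assms(3) Z by auto
  then have finC: "finite C" using fin finite_subset by blast
  obtain a where a: "a \<in> C" using assms(2) unfolding irreducible_closed_def by blast
  have c1: "closed_in_var X {a}" using closed_of_zc[OF zc_single] a CX by blast
  have c2: "closed_in_var X (C - {a})" using closed_of_zc[OF zc_finite] finC CX by blast
  have "C \<subseteq> {a} \<or> C \<subseteq> C - {a}"
  proof -
    have "C \<subseteq> {a} \<union> (C - {a})" by blast
    then show ?thesis using assms(2) c1 c2 unfolding irreducible_closed_def by blast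
  qed
  then show ?thesis using a by blast
qed

lemma L_sub_XX: "L0 \<subseteq> XX" "L1 \<subseteq> XX" "L2 \<subseteq> XX" unfolding XX_def by auto

lemma irred_L: "irreducible_closed XX L0" "irreducible_closed XX L1" "irreducible_closed XX L2"
  using line_irred[OF polyline_L0, of XX] line_irred[OF polyline_L1, of XX]
    line_irred[OF polyline_L2, of XX] zc_L0 zc_L1 zc_L2 L_sub_XX
  unfolding L0_def L1_def L2_def by auto

lemma irred_in_lines:
  assumes "irreducible_closed XX Y"
  shows "Y \<subseteq> L0 \<or> Y \<subseteq> L1 \<or> Y \<subseteq> L2"
proof -
  have YX: "Y \<subseteq> L0 \<union> (L1 \<union> L2)" using assms closed_sub unfolding irreducible_closed_def XX_def by blast
  have c0: "closed_in_var XX L0" using closed_of_zc[OF zc_L0] L_sub_XX by blast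
  have c12: "closed_in_var XX (L1 \<union> L2)" using closed_of_zc[OF zc_union[OF zc_L1 zc_L2]] L_sub_XX by blast
  have c1: "closed_in_var XX L1" using closed_of_zc[OF zc_L1] L_sub_XX by blast
  have c2: "closed_in_var XX L2" using closed_of_zc[OF zc_L2] L_sub_XX by blast
  have "Y \<subseteq> L0 \<or> Y \<subseteq> L1 \<union> L2" using assms YX c0 c12 unfolding irreducible_closed_def by blast
  moreover have "Y \<subseteq> L1 \<union> L2 \<Longrightarrow> Y \<subseteq> L1 \<or> Y \<subseteq> L2" using assms c1 c2 unfolding irreducible_closed_def by blast
  ultimately show ?thesis by blast
qed

lemma wit: "(0,0,0) \<in> L0" "(0,0,0) \<notin> L1" "(0,0,0) \<notin> L2"
  "(2,1,1) \<in> L1" "(2,1,1) \<notin> L0" "(2,1,1) \<notin> L2"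
  "(-2,1,-1) \<in> L2" "(-2,1,-1) \<notin> L0" "(-2,1,-1) \<notin> L1"
  by (simp_all add: mem_L0 mem_L1 mem_L2)

lemma comps: "irreducible_components XX = {L0, L1, L2}"
proof (intro set_eqI iffI)
  fix Y assume "Y \<in> irreducible_components XX"
  then have Y: "irreducible_closed XX Y" "\<And>Y'. irreducible_closed XX Y' \<Longrightarrow> Y \<subseteq> Y' \<Longrightarrow> Y' = Y"
    unfolding irreducible_components_def by auto
  show "Y \<in> {L0, L1, L2}" using irred_in_lines[OF Y(1)] Y(2) irred_L by blast
next
  fix Y assume "Y \<in> {L0, L1, L2}"
  then have Y: "irreducible_closed XX Y" "Y = L0 \<or> Y = L1 \<or> Y = L2" using irred_L by auto
  have "Y' = Y" if "irreducible_closed XX Y'" "Y \<subseteq> Y'" for Y'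
  proof -
    have "Y' \<subseteq> L0 \<or> Y' \<subseteq> L1 \<or> Y' \<subseteq> L2" using irred_in_lines[OF that(1)] .
    then have "Y' \<subseteq> Y" using Y(2) that(2) wit by blast
    then show ?thesis using that(2) by blast
  qed
  then show "Y \<in> irreducible_components XX" using Y(1) unfolding irreducible_components_def by blast
qed

lemma card_comps: "card (irreducible_components XX) = 3"
proof -
  have "L0 \<noteq> L1" "L0 \<noteq> L2" "L1 \<noteq> L2" using wit by blast+
  then show ?thesis unfolding comps by simp
qed

lemma krull_L0: "krull_dim XX L0 = 1"
proof -
  let ?S = "{enat n | n. \<exists>C :: nat \<Rightarrow> pt3 set.
      (\<forall>i\<le>n. irreducible_closed XX (C i) \<and> C i \<subseteq> L0) \<and> (\<forall>i<n. C i \<subset> C (Suc i))}"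
  have up: "m \<le> 1" if mS: "m \<in> ?S" for m
  proof -
    obtain n C where m: "m = enat n" and C: "\<forall>i\<le>n. irreducible_closed XX (C i) \<and> C i \<subseteq> L0"
      "\<forall>i<n. C i \<subset> C (Suc i)" using mS by blast
    have "n \<le> 1"
    proof (rule ccontr)
      assume "\<not> n \<le> 1"
      then have n2: "2 \<le> n" by simp
      have s1: "C (Suc 0) \<subset> C (Suc (Suc 0))" using C(2) n2 by auto
      have s0: "C 0 \<subset> C (Suc 0)" using C(2) n2 by auto
      have "C (Suc (Suc 0)) \<subseteq> L0" using C(1) n2 by auto
      then have ne: "C (Suc 0) \<noteq> L0" using s1 by blast
      have ic: "irreducible_closed XX (C (Suc 0))" "C (Suc 0) \<subseteq> L0" using C(1) n2 by auto
      obtain a where a: "C (Suc 0) = {a}"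
        using irred_sub_line[OF polyline_L0 ic(1)] ic(2) ne L_sub_XX(1) unfolding L0_def by blast
      have "C 0 \<noteq> {}" using C(1) unfolding irreducible_closed_def by auto
      then show False using a s0 by (auto simp: psubset_eq subset_singleton_iff)
    qed
    then show ?thesis using m by (simp add: one_enat_def)
  qed
  have one: "1 \<in> ?S"
  proof -
    define C where "C = (\<lambda>i::nat. if i = 0 then {(0::complex,0::complex,0::complex)} else L0)"
    have cl: "closed_in_var XX {(0,0,0)}" using closed_of_zc[OF zc_single] wit(1) L_sub_XX(1) by blast
    have i0: "irreducible_closed XX {(0,0,0)}"
      using cl by (simp add: irreducible_closed_def)
    have p1: "(1,0,0) \<in> L0" by (simp add: mem_L0)
    have lt: "{(0::complex,0::complex,0::complex)} \<subset> L0" using wit(1) p1 by (metis insert_subset psubsetI singletonD zero_neq_one prod.inject empty_subsetI)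
    have c0: "C 0 = {(0,0,0)}" and c1: "C (Suc 0) = L0" by (simp_all add: C_def)
    have A: "\<forall>i\<le>Suc 0. irreducible_closed XX (C i) \<and> C i \<subseteq> L0"
    proof (intro allI impI)
      fix i :: nat assume "i \<le> Suc 0"
      then have "i = 0 \<or> i = Suc 0" by auto
      then show "irreducible_closed XX (C i) \<and> C i \<subseteq> L0"
        using c0 c1 i0 irred_L(1) lt by auto
    qed
    have B: "\<forall>i<Suc 0. C i \<subset> C (Suc i)" using c0 c1 lt by auto
    have "enat (Suc 0) \<in> ?S" using A B by blast
    then show ?thesis by (simp add: one_enat_def)
  qed
  have le: "Sup ?S \<le> 1" by (rule Sup_least) (rule up)
  have ge: "1 \<le> Sup ?S" by (rule Sup_upper) (rule one)
  show ?thesis unfolding krull_dim_def using le ge by (rule antisym)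
qed


lemma only_L0:
  assumes "Y \<in> irreducible_components XX" "klein_rep A B" "irreducible_pair A B" "char_pt A B \<in> Y"
  shows "Y = L0"
proof -
  have Y: "Y = L0 \<or> Y = L1 \<or> Y = L2" using assms(1) comps by auto
  have t: "trace A \<noteq> 2" "trace A \<noteq> -2" using irred_trace[OF assms(2,3)] by auto
  have "char_pt A B \<notin> L1" "char_pt A B \<notin> L2" using t by (simp_all add: char_pt_def mem_L1 mem_L2)
  then show ?thesis using Y assms(4) by blast
qed

lemma witness_irr:
  "klein_rep (mk2 \<i> 0 0 (-\<i>)) (mk2 0 1 (-1) 0) \<and> irreducible_pair (mk2 \<i> 0 0 (-\<i>)) (mk2 0 1 (-1) 0)
   \<and> char_pt (mk2 \<i> 0 0 (-\<i>)) (mk2 0 1 (-1) 0) = (0,0,0)"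
proof (intro conjI)
  show "klein_rep (mk2 \<i> 0 0 (-\<i>)) (mk2 0 1 (-1) 0)" by (simp add: klein_rep_iff)
  show "char_pt (mk2 \<i> 0 0 (-\<i>)) (mk2 0 1 (-1) 0) = (0,0,0)" by (simp add: char_pt_def)
  show "irreducible_pair (mk2 \<i> 0 0 (-\<i>)) (mk2 0 1 (-1) 0)"
    unfolding irreducible_pair_def
  proof
    assume "\<exists>v. v \<noteq> 0 \<and> (\<exists>c. mk2 \<i> 0 0 (- \<i>) *v v = c *s v) \<and> (\<exists>d. mk2 0 1 (- 1) 0 *v v = d *s v)"
    then obtain v c d where v: "v \<noteq> 0" "mk2 \<i> 0 0 (- \<i>) *v v = c *s v" "mk2 0 1 (- 1) 0 *v v = d *s v"
      by blast
    obtain u1 u2 where vv: "v = mkv u1 u2" using mkv_eta by blast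
    have e: "\<i> * u1 = c * u1" "- \<i> * u2 = c * u2" "u2 = d * u1" "- u1 = d * u2"
      using v(2,3) unfolding vv by simp_all
    show False
    proof (cases "u1 = 0")
      case True
      then show False using e v(1) vv by simp
    next
      case False
      have ci: "c = \<i>" using e(1) False by simp
      have "u1 * (1 + d*d) = 0" using e(3,4) by algebra
      then have "d*d = -1" using False by (simp add: add_eq_0_iff)
      then have "u2 \<noteq> 0" using e(3) False by auto
      then have "c = - \<i>" using e(2) by (metis minus_mult_left mult_cancel_right)
      then show False using ci by simp
    qed
  qed
qed

theorem corollary4p2:
  shows "card (irreducible_components klein_char_variety) = 3 \<and>
    (\<exists>!Y. Y \<in> irreducible_components klein_char_variety \<and>
        (\<exists>A B. klein_rep A B \<and> irreducible_pair A B \<and> char_pt A B \<in> Y)) \<and>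
    (\<forall>Y \<in> irreducible_components klein_char_variety.
        (\<exists>A B. klein_rep A B \<and> irreducible_pair A B \<and> char_pt A B \<in> Y) \<longrightarrow>
        krull_dim klein_char_variety Y = 1)"
  unfolding char_var_eq
proof (intro conjI)
  show "card (irreducible_components XX) = 3" by (rule card_comps)
  show "\<exists>!Y. Y \<in> irreducible_components XX \<and>
        (\<exists>A B. klein_rep A B \<and> irreducible_pair A B \<and> char_pt A B \<in> Y)"
  proof (rule ex1I[of _ L0])
    show "L0 \<in> irreducible_components XX \<and>
        (\<exists>A B. klein_rep A B \<and> irreducible_pair A B \<and> char_pt A B \<in> L0)"
    proof
      show "L0 \<in> irreducible_components XX" using comps by simp
      show "\<exists>A B. klein_rep A B \<and> irreducible_pair A B \<and> char_pt A B \<in> L0"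
        using witness_irr wit(1) by metis
    qed
    show "Y = L0" if "Y \<in> irreducible_components XX \<and>
        (\<exists>A B. klein_rep A B \<and> irreducible_pair A B \<and> char_pt A B \<in> Y)" for Y
      using that only_L0 by blast
  qed
  show "\<forall>Y \<in> irreducible_components XX.
        (\<exists>A B. klein_rep A B \<and> irreducible_pair A B \<and> char_pt A B \<in> Y) \<longrightarrow>
        krull_dim XX Y = 1"
    using only_L0 krull_L0 by blast
qed

end
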